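(* Let $n\geqslant 2$. The subset $H(\mathbb{I})\cup E(\mathbf{I}\mathbb{N}_{\infty}^n)$ generates the semigroup $\mathbf{I}\mathbb{N}_{\infty}^n$. Moreover, any subset $A=A_1\sqcup A_2\subseteq\mathbf{I}\mathbb{N}_{\infty}^n$ such that $A_1$ generates the group $H(\mathbb{I})$ and $A_2$ generates the semilattice $E(\mathbf{I}\mathbb{N}_{\infty}^n)$ generates $\mathbf{I}\mathbb{N}_{\infty}^n$.
   Context: $\mathbb{N}=\{1,2,3,\ldots\}$, $n\geqslant 2$, and $\mathbb{N}^n$ carries the Euclidean metric $d$. A partial isometry of $\mathbb{N}^n$ is an injective partial map $\alpha\colon\mathbb{N}^n\rightharpoonup\mathbb{N}^n$ with $d((\mathbf{x})\alpha,(\mathbf{y})\alpha)=d(\mathbf{x},\mathbf{y})$ for all $\mathbf{x},\mathbf{y}\in\operatorname{dom}\alpha$; it is cofinite if $\mathbb{N}^n\setminus\operatorname{dom}\alpha$ and $\mathbb{N}^n\setminus\operatorname{ran}\alpha$ are finite. $\mathbf{I}\mathbb{N}_{\infty}^n$ is the monoid of all partial cofinite isometries of $\mathbb{N}^n$ under composition of partial maps written on the right: $\mathbf{x}(\alpha\beta)=(\mathbf{x}\alpha)\beta$ with $\operatorname{dom}(\alpha\beta)=\{\mathbf{x}\in\operatorname{dom}\alpha\colon \mathbf{x}\alpha\in\operatorname{dom}\beta\}$. Its identity is the identity map $\mathbb{I}$ of $\mathbb{N}^n$, $H(\mathbb{I})$ is its group of units and $E(\mathbf{I}\mathbb{N}_{\infty}^n)$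 its set of idempotents. *)

theory Defs
  imports "HOL-Analysis.Analysis"
begin

text \<open>Points of \<open>\<nat>\<^sup>n\<close>: vectors with natural-number components, all \<open>\<ge> 1\<close>
  (the paper's \<open>\<nat> = {1,2,3,...}\<close>). The dimension n is the cardinality of the
  finite index type 'n.\<close>

definition Npts :: "(nat ^ 'n::finite) set" where
  "Npts = {x. \<forall>i. 1 \<le> x $ i}"

definition Ndist :: "nat ^ 'n::finite \<Rightarrow> nat ^ 'n \<Rightarrow> real" where
  "Ndist x y = dist ((\<chi> i. real (x $ i)) :: real ^ 'n) (\<chi> i. real (y $ i))"

definition partial_isometry :: "(nat ^ 'n::finite \<rightharpoonup> nat ^ 'n) \<Rightarrow> bool" where
  "partial_isometry \<alpha> \<longleftrightarrow>
     dom \<alpha> \<subseteq> Npts \<and> ran \<alpha> \<subseteq> Npts \<and> inj_on \<alpha> (dom \<alpha>) \<and>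
     (\<forall>x\<in>dom \<alpha>. \<forall>y\<in>dom \<alpha>. Ndist (the (\<alpha> x)) (the (\<alpha> y)) = Ndist x y)"

definition INinf :: "(nat ^ 'n::finite \<rightharpoonup> nat ^ 'n) set" where
  "INinf = {\<alpha>. partial_isometry \<alpha> \<and> finite (Npts - dom \<alpha>) \<and> finite (Npts - ran \<alpha>)}"

text \<open>Composition written on the right: \<open>x(\<alpha>\<beta>) = (x\<alpha>)\<beta>\<close>.\<close>
definition pmult :: "('a \<rightharpoonup> 'a) \<Rightarrow> ('a \<rightharpoonup> 'a) \<Rightarrow> ('a \<rightharpoonup> 'a)" where
  "pmult \<alpha> \<beta> = \<beta> \<circ>\<^sub>m \<alpha>"

definition Nid :: "nat ^ 'n::finite \<rightharpoonup> nat ^ 'n" where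
  "Nid x = (if x \<in> Npts then Some x else None)"

definition Hunits :: "(nat ^ 'n::finite \<rightharpoonup> nat ^ 'n) set" where
  "Hunits = {\<alpha> \<in> INinf. \<exists>\<beta>\<in>INinf. pmult \<alpha> \<beta> = Nid \<and> pmult \<beta> \<alpha> = Nid}"

definition Eidem :: "(nat ^ 'n::finite \<rightharpoonup> nat ^ 'n) set" where
  "Eidem = {\<alpha> \<in> INinf. pmult \<alpha> \<alpha> = \<alpha>}"

definition pinv :: "('a \<rightharpoonup> 'a) \<Rightarrow> ('a \<rightharpoonup> 'a)" where
  "pinv \<alpha> y = (if y \<in> ran \<alpha> then Some (THE x. \<alpha> x = Some y) else None)"

inductive_set sgen :: "('a \<rightharpoonup> 'a) set \<Rightarrow> ('a \<rightharpoonup> 'a) set" for A where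
  base: "a \<in> A \<Longrightarrow> a \<in> sgen A"
| mult: "a \<in> sgen A \<Longrightarrow> b \<in> sgen A \<Longrightarrow> pmult a b \<in> sgen A"

inductive_set ggen :: "(nat ^ 'n::finite \<rightharpoonup> nat ^ 'n) set \<Rightarrow> (nat ^ 'n \<rightharpoonup> nat ^ 'n) set"
  for A where
  unit: "Nid \<in> ggen A"
| base: "a \<in> A \<Longrightarrow> a \<in> ggen A"
| inv: "a \<in> ggen A \<Longrightarrow> pinv a \<in> ggen A"
| mult: "a \<in> ggen A \<Longrightarrow> b \<in> ggen A \<Longrightarrow> pmult a b \<in> ggen A"

end

theory Submission
  imports Defs
begin

definition sq :: "nat^'n::finite \<Rightarrow> nat^'n \<Rightarrow> int" where
  "sq x y = (\<Sum>j\<in>UNIV. (int (x$j) - int (y$j))^2)"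

definition ip :: "nat^'n::finite \<Rightarrow> nat^'n \<Rightarrow> nat^'n \<Rightarrow> int" where
  "ip a x y = (\<Sum>j\<in>UNIV. (int (x$j) - int (a$j)) * (int (y$j) - int (a$j)))"

lemma Ndist_sq: "Ndist x y = sqrt (real_of_int (sq x y))"
  unfolding Ndist_def sq_def dist_vec_def L2_set_def dist_real_def
  by (simp add: power2_abs)

lemma sq_nonneg: "sq x y \<ge> 0"
  unfolding sq_def by (simp add: sum_nonneg)

lemma sq_eq: "Ndist u v = Ndist x y \<Longrightarrow> sq u v = sq x y"
  unfolding Ndist_sq using sq_nonneg[of u v] sq_nonneg[of x y]
  by simp

lemma ip_sq: "2 * ip a x y = sq x a + sq y a - sq x y"
proof -
  have "2 * ip a x y = (\<Sum>j\<in>UNIV. 2 * ((int (x$j) - int (a$j)) * (int (y$j) - int (a$j))))"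
    unfolding ip_def by (simp add: sum_distrib_left)
  also have "\<dots> = (\<Sum>j\<in>UNIV. (int (x$j) - int (a$j))^2 + (int (y$j) - int (a$j))^2 - (int (x$j) - int (y$j))^2)"
    by (rule sum.cong) (auto simp: power2_eq_square algebra_simps)
  also have "\<dots> = sq x a + sq y a - sq x y"
    unfolding sq_def by (simp add: sum.distrib sum_subtractf)
  finally show ?thesis .
qed

lemma sum_single_int:
  fixes g :: "'a::finite \<Rightarrow> int"
  assumes "\<And>j. j \<noteq> k \<Longrightarrow> g j = 0"
  shows "(\<Sum>j\<in>UNIV. g j) = g k"
  using assms by (subst sum.remove[of _ k]) auto

lemma unit_sum:
  fixes g :: "'a::finite \<Rightarrow> int"
  assumes "(\<Sum>j\<in>UNIV. (g j)^2) = 1"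
  shows "\<exists>k. (g k = 1 \<or> g k = -1) \<and> (\<forall>j. j \<noteq> k \<longrightarrow> g j = 0)"
proof -
  have "\<exists>k. g k \<noteq> 0"
  proof (rule ccontr)
    assume "\<not> (\<exists>k. g k \<noteq> 0)"
    hence "\<forall>j. g j = 0" by auto
    thus False using assms by simp
  qed
  then obtain k where k: "g k \<noteq> 0" by blast
  have eq: "(\<Sum>j\<in>UNIV. (g j)^2) = (g k)^2 + (\<Sum>j\<in>UNIV-{k}. (g j)^2)"
    by (subst sum.remove[of _ k]) auto
  have nn: "(\<Sum>j\<in>UNIV-{k}. (g j)^2) \<ge> 0" by (simp add: sum_nonneg)
  have "(g k)^2 \<ge> 1" using k
    by (metis int_one_le_iff_zero_less zero_less_power2)
  hence gk: "(g k)^2 = 1" and rest: "(\<Sum>j\<in>UNIV-{k}. (g j)^2) = 0"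
    using eq nn assms by linarith+
  have "\<forall>j\<in>UNIV-{k}. (g j)^2 = 0"
    using rest by (subst (asm) sum_nonneg_eq_0_iff) auto
  thus ?thesis using gk by (auto simp: power2_eq_1_iff)
qed

lemma bound_ex:
  assumes "finite (S :: (nat^'n::finite) set)"
  shows "\<exists>M. \<forall>x\<in>S. \<forall>j. x$j \<le> M"
proof -
  have "finite ((\<lambda>(x,j). x$j) ` (S \<times> UNIV))" using assms by simp
  then obtain M where "\<forall>n\<in>(\<lambda>(x,j). x$j) ` (S \<times> UNIV). n \<le> M"
    using finite_nat_set_iff_bounded_le by blast
  thus ?thesis by auto
qed


lemma iso_sq:
  assumes "partial_isometry \<alpha>" "x \<in> dom \<alpha>" "y \<in> dom \<alpha>"
  shows "sq (the (\<alpha> x)) (the (\<alpha> y)) = sq x y"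
proof -
  have "Ndist (the (\<alpha> x)) (the (\<alpha> y)) = Ndist x y"
    using assms unfolding partial_isometry_def by blast
  thus ?thesis by (rule sq_eq)
qed

lemma iso_ip:
  assumes "partial_isometry \<alpha>" "x \<in> dom \<alpha>" "y \<in> dom \<alpha>" "z \<in> dom \<alpha>"
  shows "ip (the (\<alpha> x)) (the (\<alpha> y)) (the (\<alpha> z)) = ip x y z"
proof -
  have "2 * ip (the (\<alpha> x)) (the (\<alpha> y)) (the (\<alpha> z)) = 2 * ip x y z"
    unfolding ip_sq using iso_sq[OF assms(1)] assms by simp
  thus ?thesis by simp
qed

lemma pmult_INinf:
  assumes a: "\<alpha> \<in> INinf" and b: "\<beta> \<in> INinf"
  shows "pmult \<alpha> \<beta> \<in> INinf"
proof -
  from a have pa: "partial_isometry \<alpha>" and fa1: "finite (Npts - dom \<alpha>)" and fa2: "finite (Npts - ran \<alpha>)"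
    unfolding INinf_def by auto
  from b have pb: "partial_isometry \<beta>" and fb1: "finite (Npts - dom \<beta>)" and fb2: "finite (Npts - ran \<beta>)"
    unfolding INinf_def by auto
  let ?g = "\<beta> \<circ>\<^sub>m \<alpha>"
  have domg: "dom ?g = {x\<in>dom \<alpha>. the (\<alpha> x) \<in> dom \<beta>}"
    by (auto simp: map_comp_def dom_def split: option.splits)
  have gx: "x \<in> dom ?g \<Longrightarrow> ?g x = \<beta> (the (\<alpha> x))" for x
    by (auto simp: map_comp_def dom_def split: option.splits)
  have ranA: "x \<in> dom \<alpha> \<Longrightarrow> the (\<alpha> x) \<in> Npts" for x
    using pa unfolding partial_isometry_def ran_def dom_def by auto
  have ranB: "y \<in> dom \<beta> \<Longrightarrow> the (\<beta> y) \<in> Npts" for y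
    using pb unfolding partial_isometry_def ran_def dom_def by auto
  have "partial_isometry ?g"
  proof -
    have "dom ?g \<subseteq> Npts" using domg pa unfolding partial_isometry_def by auto
    moreover have "ran ?g \<subseteq> Npts" using pb unfolding partial_isometry_def
      by (auto simp: ran_def map_comp_def split: option.splits)
    moreover have "inj_on ?g (dom ?g)"
    proof (rule inj_onI)
      fix x y assume xy: "x \<in> dom ?g" "y \<in> dom ?g" "?g x = ?g y"
      hence "\<beta> (the (\<alpha> x)) = \<beta> (the (\<alpha> y))" using gx by simp
      hence "the (\<alpha> x) = the (\<alpha> y)" using pb xy domg unfolding partial_isometry_def inj_on_def
        by auto
      moreover have "x \<in> dom \<alpha>" "y \<in> dom \<alpha>" using xy domg by auto
      ultimately have "\<alpha> x = \<alpha> y" by (metis domIff option.collapse)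
      thus "x = y" using pa xy domg unfolding partial_isometry_def inj_on_def by auto
    qed
    moreover have "\<forall>x\<in>dom ?g. \<forall>y\<in>dom ?g. Ndist (the (?g x)) (the (?g y)) = Ndist x y"
      using pa pb domg gx unfolding partial_isometry_def by auto
    ultimately show ?thesis unfolding partial_isometry_def by blast
  qed
  moreover have "finite (Npts - dom ?g)"
  proof -
    have "Npts - dom ?g \<subseteq> (Npts - dom \<alpha>) \<union> ((\<lambda>x. the (\<alpha> x)) -` (Npts - dom \<beta>) \<inter> dom \<alpha>)"
      using domg ranA by (auto simp: domIff) (metis domI option.sel)
    moreover have "finite ((\<lambda>x. the (\<alpha> x)) -` (Npts - dom \<beta>) \<inter> dom \<alpha>)"
    proof (rule finite_vimage_IntI[OF fb1])
      show "inj_on (\<lambda>x. the (\<alpha> x)) (dom \<alpha>)"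
        using pa unfolding partial_isometry_def inj_on_def dom_def by force
    qed
    ultimately show ?thesis using fa1 by (meson finite_Un finite_subset)
  qed
  moreover have "finite (Npts - ran ?g)"
  proof -
    have "Npts - ran ?g \<subseteq> (Npts - ran \<beta>) \<union> (\<lambda>z. the (\<beta> z)) ` (Npts - ran \<alpha>)"
    proof
      fix y assume y: "y \<in> Npts - ran ?g"
      show "y \<in> (Npts - ran \<beta>) \<union> (\<lambda>z. the (\<beta> z)) ` (Npts - ran \<alpha>)"
      proof (cases "y \<in> ran \<beta>")
        case True
        then obtain z where z: "\<beta> z = Some y" by (auto simp: ran_def)
        have zN: "z \<in> Npts" using pb z unfolding partial_isometry_def by (auto simp: dom_def)
        have "z \<notin> ran \<alpha>"
        proof
          assume "z \<in> ran \<alpha>"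
          then obtain x where "\<alpha> x = Some z" by (auto simp: ran_def)
          hence "?g x = Some y" using z by simp
          thus False using y by (auto simp: ran_def)
        qed
        thus ?thesis using zN z by force
      qed (use y in auto)
    qed
    thus ?thesis using fb2 fa2 by (meson finite_Un finite_imageI finite_subset)
  qed
  ultimately show ?thesis unfolding INinf_def pmult_def by blast
qed

lemma sgen_INinf: assumes "B \<subseteq> INinf" shows "sgen B \<subseteq> INinf"
proof
  fix a assume "a \<in> sgen B"
  thus "a \<in> INinf" using assms by (induction rule: sgen.induct) (auto intro: pmult_INinf)
qed

lemma sgen_sub: assumes "B \<subseteq> sgen C" shows "sgen B \<subseteq> sgen C"
proof
  fix a assume "a \<in> sgen B"
  thus "a \<in> sgen C" using assms by (induction rule: sgen.induct) (auto intro: sgen.mult)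
qed

lemma sgen_mono: "B \<subseteq> C \<Longrightarrow> sgen B \<subseteq> sgen C"
  by (rule sgen_sub) (auto intro: sgen.base)


definition Pm :: "('n \<Rightarrow> 'n) \<Rightarrow> nat^'n::finite \<rightharpoonup> nat^'n" where
  "Pm p y = (if y \<in> Npts then Some (\<chi> j. y $ p j) else None)"

lemma Pm_Npts: "y \<in> Npts \<Longrightarrow> (\<chi> j. y $ p j) \<in> Npts"
  unfolding Npts_def by simp

lemma Pm_comp: "pmult (Pm p) (Pm q) = Pm (p \<circ> q)"
  by (rule ext) (simp add: pmult_def Pm_def map_comp_def Pm_Npts)

lemma Pm_id: "Pm id = Nid"
  by (rule ext) (simp add: Pm_def Nid_def)

lemma Pm_ran:
  fixes p :: "'n::finite \<Rightarrow> 'n"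
  assumes p: "bij p"
  shows "ran (Pm p) = Npts"
proof
  show "ran (Pm p) \<subseteq> Npts" by (auto simp: ran_def Pm_def Pm_Npts split: if_splits)
  show "Npts \<subseteq> ran (Pm p)"
  proof
    fix y :: "nat^'n" assume y: "y \<in> Npts"
    let ?x = "\<chi> j. y $ inv p j"
    have "?x \<in> Npts" using y unfolding Npts_def by simp
    moreover have "(\<chi> j. ?x $ p j) = y"
      using p by (simp add: vec_eq_iff inv_f_f[OF bij_is_inj[OF p]])
    ultimately have "Pm p ?x = Some y" by (simp add: Pm_def)
    thus "y \<in> ran (Pm p)" by (auto simp: ran_def)
  qed
qed

lemma Pm_INinf:
  fixes p :: "'n::finite \<Rightarrow> 'n"
  assumes p: "bij p"
  shows "Pm p \<in> INinf"
proof -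
  have dom: "dom (Pm p) = Npts" by (auto simp: Pm_def dom_def)
  have ran: "ran (Pm p) = Npts" by (rule Pm_ran[OF p])
  have inj: "inj_on (Pm p) (dom (Pm p))"
  proof (rule inj_onI)
    fix x y assume "x \<in> dom (Pm p)" "y \<in> dom (Pm p)" "Pm p x = Pm p y"
    hence "(\<chi> j. x $ p j) = (\<chi> j. y $ p j)" by (auto simp: Pm_def dom_def split: if_splits)
    hence "\<forall>j. x $ p j = y $ p j" by (simp add: vec_eq_iff)
    hence "\<forall>k. x $ k = y $ k" using p by (metis bij_pointE)
    thus "x = y" by (simp add: vec_eq_iff)
  qed
  have iso: "\<forall>x\<in>dom (Pm p). \<forall>y\<in>dom (Pm p). Ndist (the (Pm p x)) (the (Pm p y)) = Ndist x y"
  proof (intro ballI)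
    fix x y assume "x \<in> dom (Pm p)" "y \<in> dom (Pm p)"
    hence "x \<in> Npts" "y \<in> Npts" using dom by auto
    hence e: "the (Pm p x) = (\<chi> j. x $ p j)" "the (Pm p y) = (\<chi> j. y $ p j)" by (auto simp: Pm_def)
    have "sq (\<chi> j. x $ p j) (\<chi> j. y $ p j) = (\<Sum>j\<in>UNIV. (int (x $ p j) - int (y $ p j))^2)"
      by (simp add: sq_def)
    also have "\<dots> = (\<Sum>j\<in>p ` UNIV. (int (x $ j) - int (y $ j))^2)"
      using p by (simp add: sum.reindex bij_is_inj)
    also have "\<dots> = sq x y" using p by (simp add: sq_def bij_is_surj)
    finally show "Ndist (the (Pm p x)) (the (Pm p y)) = Ndist x y"
      using e by (simp add: Ndist_sq)
  qed
  show ?thesis unfolding INinf_def partial_isometry_def using dom ran inj iso by simp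
qed

lemma Nid_INinf: "Nid \<in> INinf"
  using Pm_INinf[of id] by (simp add: Pm_id)

lemma Nid_Eidem: "Nid \<in> Eidem"
  using Nid_INinf unfolding Eidem_def
  by (simp add: Pm_id[symmetric] Pm_comp)

lemma Pm_Hunits:
  assumes p: "bij p"
  shows "Pm p \<in> Hunits"
proof -
  have "bij (inv p)" using p by (rule bij_imp_bij_inv)
  moreover have "p \<circ> inv p = id" using bij_is_surj[OF p, unfolded surj_iff] .
  moreover have "inv p \<circ> p = id" using bij_is_inj[OF p, unfolded inj_iff] .
  ultimately have "bij (inv p)" "pmult (Pm p) (Pm (inv p)) = Nid" "pmult (Pm (inv p)) (Pm p) = Nid"
    by (simp_all add: Pm_comp Pm_id[symmetric])
  thus ?thesis unfolding Hunits_def using Pm_INinf p by blast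
qed

definition eps :: "(nat^'n::finite) set \<Rightarrow> nat^'n \<rightharpoonup> nat^'n" where
  "eps D x = (if x \<in> D then Some x else None)"

lemma eps_Eidem:
  assumes "D \<subseteq> Npts" "finite (Npts - D)"
  shows "eps D \<in> Eidem"
proof -
  have dom: "dom (eps D) = D" and ran: "ran (eps D) = D"
    by (auto simp: eps_def dom_def ran_def)
  have "partial_isometry (eps D)"
    unfolding partial_isometry_def dom ran using assms
    by (auto simp: eps_def inj_on_def)
  moreover have "pmult (eps D) (eps D) = eps D"
    by (rule ext) (simp add: pmult_def eps_def map_comp_def)
  ultimately show ?thesis using assms unfolding Eidem_def INinf_def by (simp add: dom ran)
qed

fun pw :: "('a \<rightharpoonup> 'a) \<Rightarrow> ('a \<rightharpoonup> 'a) \<Rightarrow> nat \<Rightarrow> ('a \<rightharpoonup> 'a)" where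
  "pw e a 0 = e"
| "pw e a (Suc k) = pmult (pw e a k) a"

lemma pw_sgen: "e \<in> sgen B \<Longrightarrow> a \<in> sgen B \<Longrightarrow> pw e a k \<in> sgen B"
  by (induction k) (auto intro: sgen.mult)

lemma pw_Pm: "pw Nid (Pm p) k = Pm (p ^^ k)"
proof (induction k)
  case 0 show ?case by (simp add: Pm_id[symmetric] id_def)
next
  case (Suc k)
  have "pw Nid (Pm p) (Suc k) = Pm (p ^^ k \<circ> p)" using Suc by (simp add: Pm_comp)
  thus ?case by (simp only: funpow_Suc_right)
qed

lemma finite_order:
  fixes p :: "'a::finite \<Rightarrow> 'a"
  assumes p: "bij p"
  shows "\<exists>m. p ^^ Suc m = id"
proof -
  have "\<not> inj (\<lambda>k::nat. p ^^ k)"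
  proof
    assume "inj (\<lambda>k::nat. p ^^ k)"
    hence "infinite (range (\<lambda>k::nat. p ^^ k))" by (rule range_inj_infinite)
    moreover have "finite (range (\<lambda>k::nat. p ^^ k))"
      by (rule finite_subset[OF subset_UNIV]) simp
    ultimately show False by contradiction
  qed
  then obtain i0 j0 where ij0: "i0 \<noteq> j0" "p ^^ i0 = p ^^ j0" unfolding inj_def by blast
  then obtain i j where lt: "i < j" and ij: "p ^^ i = p ^^ j"
    by (metis linorder_neqE_nat)
  have bi: "bij (p ^^ i)" using p unfolding bij_def[symmetric] by (simp add: bij_betw_funpow)
  have "p ^^ (j - i) \<circ> p ^^ i = p ^^ j" using lt by (simp add: funpow_add[symmetric])
  hence "p ^^ (j - i) \<circ> p ^^ i = id \<circ> p ^^ i" using ij by simp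
  hence "p ^^ (j - i) = id"
  proof -
    assume h: "p ^^ (j - i) \<circ> p ^^ i = id \<circ> p ^^ i"
    show ?thesis
    proof (rule ext)
      fix x
      obtain y where "x = (p ^^ i) y" using bij_is_surj[OF bi] by (metis surjD)
      thus "(p ^^ (j - i)) x = id x" using fun_cong[OF h, of y] by simp
    qed
  qed
  moreover obtain m where "j - i = Suc m" using lt by (metis Suc_diff_Suc)
  ultimately show ?thesis by auto
qed

lemma pinv_Pm:
  fixes p :: "'n::finite \<Rightarrow> 'n"
  assumes p: "bij p"
  shows "pinv (Pm p) = Pm (inv p)"
proof (rule ext)
  fix y :: "nat^'n"
  show "pinv (Pm p) y = Pm (inv p) y"
  proof (cases "y \<in> Npts")
    case True
    let ?x = "\<chi> j. y $ inv p j"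
    have xN: "?x \<in> Npts" using True Pm_Npts by blast
    have px: "Pm p ?x = Some y" using xN
      by (simp add: Pm_def vec_eq_iff inv_f_f[OF bij_is_inj[OF p]])
    have "(THE x. Pm p x = Some y) = ?x"
    proof (rule the_equality)
      show "Pm p ?x = Some y" by (rule px)
      fix x assume "Pm p x = Some y"
      moreover have "inj_on (Pm p) (dom (Pm p))" using Pm_INinf[OF p]
        unfolding INinf_def partial_isometry_def by blast
      ultimately show "x = ?x" using px by (auto simp: inj_on_def dom_def)
    qed
    thus ?thesis using True Pm_ran[OF p] by (simp add: pinv_def Pm_def)
  next
    case False
    thus ?thesis using Pm_ran[OF p] by (simp add: pinv_def Pm_def)
  qed
qed


lemma core:
  fixes \<alpha> :: "nat^'n::finite \<rightharpoonup> nat^'n"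
  assumes card: "CARD('n) \<ge> 2" and A: "\<alpha> \<in> INinf"
  shows "\<exists>p. bij p \<and> (\<forall>x\<in>dom \<alpha>. \<alpha> x = Some (\<chi> j. x $ p j))"
proof -
  have pa: "partial_isometry \<alpha>" and f1: "finite (Npts - dom \<alpha>)" and f2: "finite (Npts - ran \<alpha>)"
    using A unfolding INinf_def by auto
  have domN: "dom \<alpha> \<subseteq> Npts" and ranN: "ran \<alpha> \<subseteq> Npts"
    using pa unfolding partial_isometry_def by auto
  have other: "\<exists>j. j \<noteq> i" for i :: 'n
  proof (rule ccontr)
    assume "\<not> (\<exists>j. j \<noteq> i)"
    hence "UNIV = {i}" by auto
    hence "card (UNIV::'n set) = card {i}" by (rule arg_cong)
    hence "CARD('n) = 1" by simp
    thus False using card by simp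
  qed
  obtain M where M: "\<forall>x\<in>Npts - dom \<alpha>. \<forall>j. x$j \<le> M" using bound_ex[OF f1] by blast
  obtain M2 where M2: "\<forall>x\<in>Npts - ran \<alpha>. \<forall>j. x$j \<le> M2" using bound_ex[OF f2] by blast
  have inD: "x \<in> dom \<alpha>" if "x \<in> Npts" "x $ j > M" for x j
  proof (rule ccontr)
    assume "x \<notin> dom \<alpha>"
    hence "x \<in> Npts - dom \<alpha>" using that by auto
    hence "x $ j \<le> M" using M by blast
    thus False using that by simp
  qed
  have inR: "y \<in> ran \<alpha>" if "y \<in> Npts" "y $ j > M2" for y j
  proof (rule ccontr)
    assume "y \<notin> ran \<alpha>"
    hence "y \<in> Npts - ran \<alpha>" using that by auto
    hence "y $ j \<le> M2" using M2 by blast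
    thus False using that by simp
  qed
  define f where "f x = the (\<alpha> x)" for x
  have fS: "\<alpha> x = Some (f x)" if "x \<in> dom \<alpha>" for x
    using that unfolding f_def by auto
  have fN: "f x \<in> Npts" if "x \<in> dom \<alpha>" for x
    using fS[OF that] ranN by (auto simp: ran_def)
  have ipf: "ip (f x) (f y) (f z) = ip x y z" if "x \<in> dom \<alpha>" "y \<in> dom \<alpha>" "z \<in> dom \<alpha>" for x y z
    unfolding f_def using iso_ip[OF pa that] .
  define a :: "nat^'n" where "a = (\<chi> j. M+1)"
  define e :: "'n \<Rightarrow> nat^'n" where "e i = (\<chi> j. if j = i then M+2 else M+1)" for i
  have aD: "a \<in> dom \<alpha>" by (rule inD[of a undefined]) (auto simp: a_def Npts_def)
  have eD: "e i \<in> dom \<alpha>" for i by (rule inD[of _ i]) (auto simp: e_def Npts_def)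
  have ip_e: "ip a (e i) (e k) = (if i = k then 1 else 0)" for i k
  proof -
    have "ip a (e i) (e k) = (\<Sum>j\<in>UNIV. if j = i then (if i = k then 1 else 0) else 0)"
      unfolding ip_def a_def e_def by (intro sum.cong) auto
    also have "\<dots> = (if i = k then 1 else 0)" by simp
    finally show ?thesis .
  qed
  have ip_x: "ip a x (e i) = int (x$i) - int (a$i)" for x i
  proof -
    have "ip a x (e i) = (\<Sum>j\<in>UNIV. if j = i then int (x$i) - int (a$i) else 0)"
      unfolding ip_def a_def e_def by (intro sum.cong) auto
    thus ?thesis by simp
  qed
  define b where "b = f a"
  define d where "d i j = int (f (e i) $ j) - int (b $ j)" for i j
  have ipd: "ip b y (f (e i)) = (\<Sum>j\<in>UNIV. (int (y$j) - int (b$j)) * d i j)" for y i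
    unfolding ip_def d_def by simp
  have "\<forall>i. \<exists>k. (d i k = 1 \<or> d i k = -1) \<and> (\<forall>j. j \<noteq> k \<longrightarrow> d i j = 0)"
  proof
    fix i
    have "(\<Sum>j\<in>UNIV. (d i j)^2) = ip b (f (e i)) (f (e i))"
      unfolding ip_def d_def power2_eq_square by simp
    also have "\<dots> = 1" using ipf[OF aD eD eD] ip_e by (simp add: b_def)
    finally show "\<exists>k. (d i k = 1 \<or> d i k = -1) \<and> (\<forall>j. j \<noteq> k \<longrightarrow> d i j = 0)"
      by (rule unit_sum)
  qed
  then obtain \<pi> where \<pi>: "\<And>i. (d i (\<pi> i) = 1 \<or> d i (\<pi> i) = -1) \<and> (\<forall>j. j \<noteq> \<pi> i \<longrightarrow> d i j = 0)"
    by metis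
  define s where "s i = d i (\<pi> i)" for i
  have ss: "s i * s i = 1" for i using \<pi>[of i] unfolding s_def by auto
  have ipd2: "ip b y (f (e i)) = (int (y $ \<pi> i) - int (b $ \<pi> i)) * s i" for y i
    unfolding ipd s_def using \<pi>[of i] by (subst sum_single_int[where k="\<pi> i"]) auto
  have inj\<pi>: "inj \<pi>"
  proof (rule injI)
    fix i k assume eq: "\<pi> i = \<pi> k"
    show "i = k"
    proof (rule ccontr)
      assume ne: "i \<noteq> k"
      have "ip b (f (e i)) (f (e k)) = 0" using ipf[OF aD eD eD] ip_e ne by (simp add: b_def)
      moreover have "ip b (f (e i)) (f (e k)) = d i (\<pi> k) * s k"
        using ipd2 by (simp add: d_def)
      moreover have "d i (\<pi> k) = s i" using eq by (simp add: s_def)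
      ultimately have "s i * s k = 0" by simp
      thus False using ss[of i] ss[of k] by (metis mult_eq_0_iff zero_neq_one)
    qed
  qed
  define c where "c i = int (b $ \<pi> i) - s i * int (a $ i)" for i
  have key: "int (f x $ \<pi> i) = s i * int (x $ i) + c i" if x: "x \<in> dom \<alpha>" for x i
  proof -
    have h: "(int (f x $ \<pi> i) - int (b $ \<pi> i)) * s i = int (x$i) - int (a$i)"
      using ipf[OF aD x eD, of i] ipd2[of "f x" i] ip_x[of x i] by (simp add: b_def)
    have "int (f x $ \<pi> i) - int (b $ \<pi> i) = (int (f x $ \<pi> i) - int (b $ \<pi> i)) * (s i * s i)"
      using ss by simp
    also have "\<dots> = ((int (f x $ \<pi> i) - int (b $ \<pi> i)) * s i) * s i" by (simp add: mult.assoc)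
    also have "\<dots> = (int (x$i) - int (a$i)) * s i" using h by simp
    finally show ?thesis unfolding c_def by (simp add: algebra_simps)
  qed
  have s1: "s i = 1" for i
  proof (rule ccontr)
    assume "s i \<noteq> 1"
    hence sm: "s i = -1" using \<pi>[of i] unfolding s_def by auto
    define K where "K = M + 1 + nat (c i)"
    define x :: "nat^'n" where "x = (\<chi> j. K)"
    have xD: "x \<in> dom \<alpha>" by (rule inD[of x undefined]) (auto simp: x_def Npts_def K_def)
    have "f x $ \<pi> i \<ge> 1" using fN[OF xD] by (simp add: Npts_def)
    moreover have "int (f x $ \<pi> i) = - int K + c i" using key[OF xD, of i] sm by (simp add: x_def)
    ultimately show False unfolding K_def by linarith
  qed
  have c0: "c i \<ge> 0" for i
  proof -
    obtain j where j: "j \<noteq> i" using other by blast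
    define x :: "nat^'n" where "x = (\<chi> k. if k = i then 1 else M+1)"
    have xD: "x \<in> dom \<alpha>" by (rule inD[of x j]) (use j in \<open>auto simp: x_def Npts_def\<close>)
    have "f x $ \<pi> i \<ge> 1" using fN[OF xD] by (simp add: Npts_def)
    moreover have "int (f x $ \<pi> i) = 1 + c i" using key[OF xD, of i] s1 by (simp add: x_def)
    ultimately show ?thesis by linarith
  qed
  have c1: "c i \<le> 0" for i
  proof (rule ccontr)
    assume ci: "\<not> c i \<le> 0"
    obtain j where j: "j \<noteq> \<pi> i" using other by blast
    define y :: "nat^'n" where "y = (\<chi> k. if k = \<pi> i then 1 else M2+1)"
    have "y \<in> ran \<alpha>" by (rule inR[of y j]) (use j in \<open>auto simp: y_def Npts_def\<close>)
    then obtain x where x: "\<alpha> x = Some y" by (auto simp: ran_def)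
    hence xD: "x \<in> dom \<alpha>" by auto
    have fx: "f x = y" using x by (simp add: f_def)
    have "x $ i \<ge> 1" using domN xD by (auto simp: Npts_def)
    moreover have "int (y $ \<pi> i) = int (x $ i) + c i" using key[OF xD, of i] s1 fx by simp
    moreover have "y $ \<pi> i = 1" by (simp add: y_def)
    ultimately show False using ci by linarith
  qed
  have fx: "f x $ \<pi> i = x $ i" if "x \<in> dom \<alpha>" for x i
    using key[OF that, of i] s1[of i] c0[of i] c1[of i] by simp
  have surj\<pi>: "surj \<pi>" using finite_UNIV_inj_surj[OF _ inj\<pi>] by simp
  have bij\<pi>: "bij \<pi>" using inj\<pi> surj\<pi> by (simp add: bij_def)
  show ?thesis
  proof (intro exI conjI ballI)
    show "bij (inv \<pi>)" using bij\<pi> by (rule bij_imp_bij_inv)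
    fix x assume x: "x \<in> dom \<alpha>"
    have "f x = (\<chi> j. x $ inv \<pi> j)"
    proof (subst vec_eq_iff, intro allI)
      fix j
      have "f x $ j = f x $ \<pi> (inv \<pi> j)" by (simp add: surj_f_inv_f[OF surj\<pi>])
      also have "\<dots> = x $ inv \<pi> j" by (rule fx[OF x])
      finally show "f x $ j = (\<chi> j. x $ inv \<pi> j) $ j" by simp
    qed
    thus "\<alpha> x = Some (\<chi> j. x $ inv \<pi> j)" using fS[OF x] by simp
  qed
qed


lemma decomp:
  fixes \<alpha> :: "nat^'n::finite \<rightharpoonup> nat^'n"
  assumes card: "CARD('n) \<ge> 2" and A: "\<alpha> \<in> INinf"
  shows "\<alpha> \<in> sgen (Hunits \<union> Eidem)"
proof -
  obtain p where p: "bij p" and ax: "\<forall>x\<in>dom \<alpha>. \<alpha> x = Some (\<chi> j. x $ p j)"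
    using core[OF card A] by blast
  have domN: "dom \<alpha> \<subseteq> Npts" and f1: "finite (Npts - dom \<alpha>)"
    using A unfolding INinf_def partial_isometry_def by auto
  have "\<alpha> = pmult (eps (dom \<alpha>)) (Pm p)"
  proof (rule ext)
    fix x
    show "\<alpha> x = pmult (eps (dom \<alpha>)) (Pm p) x"
    proof (cases "x \<in> dom \<alpha>")
      case True
      thus ?thesis using ax domN by (auto simp: pmult_def eps_def Pm_def)
    next
      case False
      thus ?thesis by (auto simp: pmult_def eps_def)
    qed
  qed
  moreover have "eps (dom \<alpha>) \<in> sgen (Hunits \<union> Eidem)"
    using eps_Eidem[OF domN f1] by (auto intro: sgen.base)
  moreover have "Pm p \<in> sgen (Hunits \<union> Eidem)"
    using Pm_Hunits[OF p] by (auto intro: sgen.base)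
  ultimately show ?thesis by (metis sgen.mult)
qed

lemma unit_Pm:
  fixes a :: "nat^'n::finite \<rightharpoonup> nat^'n"
  assumes card: "CARD('n) \<ge> 2" and a: "a \<in> Hunits"
  shows "\<exists>p. bij p \<and> a = Pm p"
proof -
  from a obtain \<beta> where aI: "a \<in> INinf" and ab: "pmult a \<beta> = Nid"
    unfolding Hunits_def by blast
  obtain p where p: "bij p" and ax: "\<forall>x\<in>dom a. a x = Some (\<chi> j. x $ p j)"
    using core[OF card aI] by blast
  have domN: "dom a \<subseteq> Npts" using aI unfolding INinf_def partial_isometry_def by auto
  have "Npts \<subseteq> dom a"
  proof
    fix x :: "nat^'n" assume x: "x \<in> Npts"
    hence "pmult a \<beta> x = Some x" using ab by (simp add: Nid_def)
    thus "x \<in> dom a" by (auto simp: pmult_def map_comp_def split: option.splits)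
  qed
  hence dA: "dom a = Npts" using domN by blast
  have "a = Pm p"
  proof (rule ext)
    fix x show "a x = Pm p x"
      using ax dA by (cases "x \<in> Npts") (auto simp: Pm_def)
  qed
  thus ?thesis using p by blast
qed

theorem mainTheorem11:
  assumes "CARD('n::finite) \<ge> 2"
  shows "sgen (Hunits \<union> Eidem) = (INinf :: (nat ^ 'n \<rightharpoonup> nat ^ 'n) set)
    \<and> (\<forall>A1 A2. A1 \<subseteq> Hunits \<and> A2 \<subseteq> Eidem \<and> A1 \<inter> A2 = {}
          \<and> ggen A1 = (Hunits :: (nat ^ 'n \<rightharpoonup> nat ^ 'n) set) \<and> sgen A2 = Eidem
          \<longrightarrow> sgen (A1 \<union> A2) = INinf)"
proof -
  have HI: "Hunits \<subseteq> (INinf :: (nat ^ 'n \<rightharpoonup> nat ^ 'n) set)" unfolding Hunits_def by blast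
  have EI: "Eidem \<subseteq> (INinf :: (nat ^ 'n \<rightharpoonup> nat ^ 'n) set)" unfolding Eidem_def by blast
  have P1: "sgen (Hunits \<union> Eidem) = (INinf :: (nat ^ 'n \<rightharpoonup> nat ^ 'n) set)"
  proof
    show "sgen (Hunits \<union> Eidem) \<subseteq> (INinf :: (nat ^ 'n \<rightharpoonup> nat ^ 'n) set)"
      using HI EI by (intro sgen_INinf) blast
    show "(INinf :: (nat ^ 'n \<rightharpoonup> nat ^ 'n) set) \<subseteq> sgen (Hunits \<union> Eidem)"
      using decomp[OF assms] by blast
  qed
  have P2: "sgen (A1 \<union> A2) = INinf"
    if h: "A1 \<subseteq> Hunits" "A2 \<subseteq> Eidem" "ggen A1 = (Hunits :: (nat ^ 'n \<rightharpoonup> nat ^ 'n) set)"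
          "sgen A2 = Eidem" for A1 A2
  proof
    show "sgen (A1 \<union> A2) \<subseteq> INinf"
      using sgen_mono[of "A1 \<union> A2" "Hunits \<union> Eidem"] h P1 by blast
    have ES: "Eidem \<subseteq> sgen (A1 \<union> A2)" using h(4) sgen_mono[of A2 "A1 \<union> A2"] by blast
    have NS: "Nid \<in> sgen (A1 \<union> A2)" using ES Nid_Eidem by blast
    have "a \<in> sgen (A1 \<union> A2)" if "a \<in> ggen A1" for a
      using that
    proof (induction rule: ggen.induct)
      case unit thus ?case by (rule NS)
    next
      case (base a) thus ?case by (auto intro: sgen.base)
    next
      case (inv a)
      have "a \<in> Hunits" using inv.hyps h(3) by blast
      then obtain p where p: "bij p" and ap: "a = Pm p" using unit_Pm[OF assms] by blast
      obtain m where m: "p ^^ Suc m = id" using finite_order[OF p] by blast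
      have "p \<circ> p ^^ m = id" using m by simp
      moreover have "p ^^ m \<circ> p = id" using m by (simp only: funpow_Suc_right)
      ultimately have "inv p = p ^^ m" by (rule inv_unique_comp)
      hence "pinv a = pw Nid (Pm p) m" using ap by (simp add: pinv_Pm[OF p] pw_Pm)
      moreover have "pw Nid (Pm p) m \<in> sgen (A1 \<union> A2)"
        using pw_sgen[OF NS] inv.IH ap by blast
      ultimately show ?case by simp
    next
      case (mult a b) thus ?case by (auto intro: sgen.mult)
    qed
    hence HS: "Hunits \<subseteq> sgen (A1 \<union> A2)" using h(3) by blast
    have "sgen (Hunits \<union> Eidem) \<subseteq> sgen (A1 \<union> A2)"
      using HS ES by (intro sgen_sub) blast
    thus "INinf \<subseteq> sgen (A1 \<union> A2)" using P1 by simp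
  qed
  show ?thesis using P1 P2 by blast
qed

end
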